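(* In the setting described in the context, with $\phi_1(0),\phi_2(0)>0$, one has $y_1'(x)>0$ for all $x\in(0,1)$. Moreover, if $\phi_1(0)<1$, $\phi_1(0)\phi_2(0)<1$ and $1<\phi_1(0)+\phi_1(0)\phi_2(0)$, then $y_2'$, $y_3'$ and $y_2'+y_3'$ have no zeroes on $(0,1)$; that is, $K$, $\phi_1$, $\phi_2$ and $\phi_1\phi_2$ are monotonic on $(0,1)$.
   Context: Setting: $(M^4,g)$ is a Hadamard manifold (complete, simply connected, non-positive sectional curvature) which is conformally compact Einstein ($\mathrm{Ric}_g=-3g$, and $x^2g$ extends continuously to $\overline M$ for a boundary defining function $x$) with conformal infinity $(\mathbb{S}^3,[\hat g])$, $\hat g=\lambda_1\sigma_1^2+\lambda_2\sigma_2^2+\lambda_3\sigma_3^2$, where $\sigma_i$ are the standard left-invariant $1$-forms on $\mathrm{SU}(2)\cong\mathbb{S}^3$ and $\lambda_1,\lambda_2,\lambda_3>0$ are pairwise distinct. The conformal Killing fields of $\hat g$ extend to Killing fields of $g$ having a common fixed point $p_0\in M$ (the center of gravity); with $r$ the distance to $p_0$, $x=e^{-r}$ is a geodesic defining function, and along a geodesic ray $\theta=\theta_0$ from $p_0$, in polar coordinates $(x,\theta^1,\theta^2,\theta^3)$ with $d\theta^i=\sigma_i$ at $\theta_0$, one has $g=x^{-2}\big(dx^2+\tfrac{(1-x^2)^2}{4}\bar h\big)$ with $\bar h=I_1(d\theta^1)^2+I_2(d\theta^2)^2+I_3(d\theta^3)^2$, where $I_i\in C^\infty([0,1])$ are positive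 with $I_i(1)=1$. Set $K=I_1I_2I_3$, $\phi_1=I_2/I_1$, $\phi_2=I_3/I_2$, $y_1=\log K$, $y_2=\log\phi_1$, $y_3=\log\phi_2$. Then $K(0)<1$ and $(y_1,y_2,y_3)$ satisfy on $[0,1]$: $y_1''-x^{-1}(1+3x^2)(1-x^2)^{-1}y_1'+\frac16(y_1')^2+\frac13[(y_2')^2+y_2'y_3'+(y_3')^2]=0$; $y_1''-x^{-1}(5+7x^2)(1-x^2)^{-1}y_1'+\frac12(y_1')^2+16(1-x^2)^{-2}(3-\Upsilon)=0$ with $\Upsilon=K^{-1/3}[2(\phi_1^2\phi_2)^{1/3}+2(\phi_1^{-1}\phi_2)^{1/3}+2(\phi_1\phi_2^2)^{-1/3}-\phi_1^{-4/3}\phi_2^{-2/3}-\phi_1^{2/3}\phi_2^{-2/3}-\phi_1^{2/3}\phi_2^{4/3}]$; $y_2''-2x^{-1}(1+2x^2)(1-x^2)^{-1}y_2'+\frac12y_1'y_2'+32(1-x^2)^{-2}K^{-1/3}[\phi_1^{2/3}\phi_2^{1/3}-\phi_1^{-1/3}\phi_2^{1/3}-\phi_1^{2/3}\phi_2^{-2/3}+\phi_1^{-4/3}\phi_2^{-2/3}]=0$; $y_3''-2x^{-1}(1+2x^2)(1-x^2)^{-1}y_3'+\frac12y_1'y_3'+32(1-x^2)^{-2}K^{-1/3}[\phi_1^{-1/3}\phi_2^{1/3}-\phi_1^{-1/3}\phi_2^{-2/3}-\phi_1^{2/3}\phi_2^{4/3}+\phi_1^{2/3}\phi_2^{-2/3}]=0$;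 with boundary conditions $\phi_1(0)=\lambda_2/\lambda_1$, $\phi_2(0)=\lambda_3/\lambda_2$, $K(1)=\phi_1(1)=\phi_2(1)=1$, $y_i'(0)=y_i'(1)=0$ for $i=1,2,3$. *)

theory Defs
  imports "HOL-Analysis.Analysis"
begin

definition smooth_on :: "real set \<Rightarrow> (real \<Rightarrow> real) \<Rightarrow> bool" where
  "smooth_on S f \<longleftrightarrow> (\<exists>D :: nat \<Rightarrow> real \<Rightarrow> real. D 0 = f \<and>
     (\<forall>n. \<forall>x\<in>S. (D n has_real_derivative D (Suc n) x) (at x within S)))"

definition Upsilon :: "real \<Rightarrow> real \<Rightarrow> real \<Rightarrow> real" where
  "Upsilon K p1 p2 = K powr (-1/3) *
     (2 * (p1^2 * p2) powr (1/3) + 2 * (p2 / p1) powr (1/3) + 2 * (p1 * p2^2) powr (-1/3)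
      - p1 powr (-4/3) * p2 powr (-2/3) - p1 powr (2/3) * p2 powr (-2/3)
      - p1 powr (2/3) * p2 powr (4/3))"

definition F2 :: "real \<Rightarrow> real \<Rightarrow> real \<Rightarrow> real" where
  "F2 K p1 p2 = K powr (-1/3) *
     (p1 powr (2/3) * p2 powr (1/3) - p1 powr (-1/3) * p2 powr (1/3)
      - p1 powr (2/3) * p2 powr (-2/3) + p1 powr (-4/3) * p2 powr (-2/3))"

definition F3 :: "real \<Rightarrow> real \<Rightarrow> real \<Rightarrow> real" where
  "F3 K p1 p2 = K powr (-1/3) *
     (p1 powr (-1/3) * p2 powr (1/3) - p1 powr (-1/3) * p2 powr (-2/3)
      - p1 powr (2/3) * p2 powr (4/3) + p1 powr (2/3) * p2 powr (-2/3))"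

end

theory Submission
  imports Defs
begin

lemma mono_nonpos:
  fixes f f' :: "real \<Rightarrow> real"
  assumes "a \<le> b" "continuous_on {a..b} f"
    "\<And>x. a < x \<Longrightarrow> x < b \<Longrightarrow> (f has_real_derivative f' x) (at x) \<and> f' x \<le> 0"
  shows "f b \<le> f a"
proof -
  have "- f a \<le> - f b"
  proof (rule DERIV_nonneg_imp_increasing_open[of a b "\<lambda>x. - f x"])
    show "a \<le> b" by fact
    show "continuous_on {a..b} (\<lambda>x. - f x)" using assms(2) by (intro continuous_intros)
    fix x assume "a < x" "x < b"
    then have "(f has_real_derivative f' x) (at x)" "f' x \<le> 0" using assms(3) by auto
    then show "\<exists>y. ((\<lambda>x. - f x) has_real_derivative y) (at x) \<and> 0 \<le> y"
      by (intro exI[of _ "- f' x"]) (auto intro: derivative_intros)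
  qed
  then show ?thesis by simp
qed

lemma gronwall_ineq:
  fixes p q r L :: real
  assumes "L \<ge> 0" "\<bar>r\<bar> \<le> L * (\<bar>p\<bar> + \<bar>q\<bar>)"
  shows "0 \<le> 2*p*q + 2*q*r + (1+3*L)*(p^2+q^2)"
proof -
  have a: "2*\<bar>p\<bar>*\<bar>q\<bar> \<le> p^2+q^2"
  proof -
    have "0 \<le> (\<bar>p\<bar>-\<bar>q\<bar>)^2" by simp
    then show ?thesis by (simp add: power2_eq_square algebra_simps)
  qed
  have b: "-(2*p*q) \<le> 2*\<bar>p\<bar>*\<bar>q\<bar>" by (simp add: abs_mult[symmetric])
  have c: "-(2*q*r) \<le> 2*\<bar>q\<bar>*\<bar>r\<bar>" by (simp add: abs_mult[symmetric])
  have d: "2*\<bar>q\<bar>*\<bar>r\<bar> \<le> 2*\<bar>q\<bar>*(L*(\<bar>p\<bar>+\<bar>q\<bar>))"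
    using assms(2) by (intro mult_left_mono) auto
  have e: "2*\<bar>q\<bar>*(L*(\<bar>p\<bar>+\<bar>q\<bar>)) = L*(2*\<bar>p\<bar>*\<bar>q\<bar>) + 2*L*q^2"
    by (simp add: algebra_simps power2_eq_square)
  have f: "L*(2*\<bar>p\<bar>*\<bar>q\<bar>) \<le> L*(p^2+q^2)" using a assms(1) by (intro mult_left_mono)
  have g: "2*L*q^2 \<le> 2*L*(p^2+q^2)" using assms(1) by (intro mult_left_mono) auto
  have h: "(1+3*L)*(p^2+q^2) = (p^2+q^2) + L*(p^2+q^2) + 2*L*(p^2+q^2)" by (simp add: algebra_simps)
  show ?thesis using a b c d e f g h by linarith
qed

lemma gronwall_back:
  fixes u u' u'' :: "real \<Rightarrow> real"
  assumes cd: "c \<le> d"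
   and du: "\<And>x. x \<in> {c..d} \<Longrightarrow> (u has_real_derivative u' x) (at x within {c..d})"
   and du': "\<And>x. x \<in> {c..d} \<Longrightarrow> (u' has_real_derivative u'' x) (at x within {c..d})"
   and L: "L \<ge> 0" and bnd: "\<And>x. x \<in> {c..d} \<Longrightarrow> \<bar>u'' x\<bar> \<le> L * (\<bar>u x\<bar> + \<bar>u' x\<bar>)"
   and ud: "u d = 0" and u'd: "u' d = 0"
  shows "\<forall>x\<in>{c..d}. u x = 0 \<and> u' x = 0"
proof
  fix x assume x: "x \<in> {c..d}"
  define M where "M = 1 + 3*L"
  define h where "h t = (u t * u t + u' t * u' t) * exp (M*t)" for t
  define h' where "h' t = (2*u t*u' t + 2*u' t*u'' t) * exp (M*t) + ((u t)^2 + (u' t)^2) * (exp (M*t) * M)" for t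
  have dh: "(h has_real_derivative h' t) (at t within {c..d})" if "t \<in> {c..d}" for t
    unfolding h_def h'_def
    using du[OF that] du'[OF that]
    by (auto intro!: derivative_eq_intros simp: power2_eq_square algebra_simps)
  have h'pos: "h' t \<ge> 0" if "t \<in> {c..d}" for t
  proof -
    have "0 \<le> 2*u t*u' t + 2*u' t*u'' t + M*((u t)^2+(u' t)^2)"
      unfolding M_def using gronwall_ineq[OF L bnd[OF that]] by simp
    then have "0 \<le> (2*u t*u' t + 2*u' t*u'' t + M*((u t)^2+(u' t)^2)) * exp (M*t)" by simp
    then show ?thesis unfolding h'_def by (simp add: algebra_simps)
  qed
  have conth: "continuous_on {c..d} h" by (rule DERIV_continuous_on[OF dh])
  have "(\<lambda>t. - h t) d \<le> (\<lambda>t. - h t) x"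
  proof (rule mono_nonpos[of x d "\<lambda>t. - h t" "\<lambda>t. - h' t"])
    show "x \<le> d" using x by auto
    have "continuous_on {x..d} h" using x by (intro continuous_on_subset[OF conth]) auto
    then show "continuous_on {x..d} (\<lambda>t. - h t)" by (intro continuous_intros)
    fix t assume t: "x < t" "t < d"
    then have tin: "t \<in> {c<..<d}" using x by auto
    have "(h has_real_derivative h' t) (at t within {c<..<d})"
      by (rule DERIV_subset[OF dh[of t]]) (use tin in auto)
    moreover have "at t within {c<..<d} = at t" by (rule at_within_open[OF tin]) simp
    ultimately have "(h has_real_derivative h' t) (at t)" by simp
    then show "((\<lambda>t. - h t) has_real_derivative - h' t) (at t) \<and> - h' t \<le> 0"
      using h'pos[of t] tin by (auto intro: derivative_intros)
  qed
  then have "h x \<le> 0" using ud u'd by (simp add: h_def)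
  moreover have "h x \<ge> 0" by (simp add: h_def)
  moreover have "h x = ((u x)^2 + (u' x)^2) * exp (M*x)" by (simp add: h_def power2_eq_square)
  ultimately have "((u x)^2 + (u' x)^2) * exp (M*x) \<le> 0" by simp
  then have "(u x)^2 + (u' x)^2 \<le> 0" by (simp add: mult_le_0_iff)
  then show "u x = 0 \<and> u' x = 0" by (simp add: sum_power2_le_zero_iff)
qed


lemma bounded_cont:
  fixes f :: "real \<Rightarrow> real"
  assumes "continuous_on {c..d} f"
  shows "\<exists>M\<ge>0. \<forall>x\<in>{c..d}. \<bar>f x\<bar> \<le> M"
proof -
  have "compact (f ` {c..d})" by (rule compact_continuous_image[OF assms compact_Icc])
  then have "bounded (f ` {c..d})" by (rule compact_imp_bounded)
  then obtain M where M: "\<forall>y\<in>f ` {c..d}. norm y \<le> M" by (auto simp: bounded_iff)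
  show ?thesis
    by (rule exI[of _ "max M 0"]) (use M in force)
qed

lemma abs_1_exp: "\<bar>1 - exp (y::real)\<bar> \<le> exp \<bar>y\<bar> * \<bar>y\<bar>"
proof (cases "y \<ge> 0")
  case True
  have "1 - y \<le> exp (-y)" using exp_ge_add_one_self[of "-y"] by simp
  then have "exp y * (1 - y) \<le> exp y * exp (-y)" by (intro mult_left_mono) auto
  then have "exp y * (1 - y) \<le> 1" by (simp add: exp_minus)
  moreover have "exp y \<ge> 1" using True by simp
  ultimately show ?thesis using True by (simp add: algebra_simps)
next
  case False
  have f1: "1 + y \<le> exp y" by (rule exp_ge_add_one_self)
  have "exp y \<le> 1" using False by simp
  have f2: "1 * (-y) \<le> exp (-y) * (-y)" using False by (intro mult_right_mono) auto
  have a: "\<bar>1 - exp y\<bar> = 1 - exp y" using False by simp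
  have b: "\<bar>y\<bar> = -y" using False by simp
  show ?thesis unfolding a b using f1 f2 by linarith
qed

lemma zero_back:
  fixes u u' u'' \<alpha> \<beta> :: "real \<Rightarrow> real"
  assumes x1: "0 < x1" "x1 \<le> 1"
    and du: "\<forall>x\<in>{0..1}. (u has_real_derivative u' x) (at x within {0..1})"
    and du': "\<forall>x\<in>{0..1}. (u' has_real_derivative u'' x) (at x within {0..1})"
    and ca: "continuous_on {0<..x1} \<alpha>" and cb: "continuous_on {0<..x1} \<beta>"
    and ode: "\<forall>x\<in>{0<..x1}. u'' x = \<alpha> x * u' x + \<beta> x * (1 - exp (u x))"
    and u1: "u x1 = 0" and u'1: "u' x1 = 0"
  shows "\<forall>t\<in>{0<..x1}. u t = 0 \<and> u' t = 0"
proof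
  fix t assume t: "t \<in> {0<..x1}"
  have sub: "{t..x1} \<subseteq> {0<..x1}" "{t..x1} \<subseteq> {0..1}" using t x1 by auto
  have cu: "continuous_on {0..1} u" by (rule DERIV_continuous_on) (use du in auto)
  obtain A where A: "A \<ge> 0" "\<forall>x\<in>{t..x1}. \<bar>\<alpha> x\<bar> \<le> A"
    using bounded_cont[OF continuous_on_subset[OF ca sub(1)]] by blast
  obtain B where B: "B \<ge> 0" "\<forall>x\<in>{t..x1}. \<bar>\<beta> x\<bar> \<le> B"
    using bounded_cont[OF continuous_on_subset[OF cb sub(1)]] by blast
  obtain U where U: "U \<ge> 0" "\<forall>x\<in>{t..x1}. \<bar>u x\<bar> \<le> U"
    using bounded_cont[OF continuous_on_subset[OF cu sub(2)]] by blast
  define L where "L = A + B * exp U"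
  have L0: "L \<ge> 0" unfolding L_def using A B by simp
  have bnd: "\<bar>u'' x\<bar> \<le> L * (\<bar>u x\<bar> + \<bar>u' x\<bar>)" if x: "x \<in> {t..x1}" for x
  proof -
    have e1: "\<bar>\<alpha> x * u' x\<bar> \<le> A * \<bar>u' x\<bar>"
      using A x by (simp add: abs_mult mult_right_mono)
    have "\<bar>1 - exp (u x)\<bar> \<le> exp \<bar>u x\<bar> * \<bar>u x\<bar>" by (rule abs_1_exp)
    also have "\<dots> \<le> exp U * \<bar>u x\<bar>" using U x by (intro mult_right_mono) auto
    finally have e2: "\<bar>1 - exp (u x)\<bar> \<le> exp U * \<bar>u x\<bar>" .
    have "\<bar>\<beta> x * (1 - exp (u x))\<bar> \<le> B * (exp U * \<bar>u x\<bar>)"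
      unfolding abs_mult using B x e2 by (intro mult_mono) auto
    then have e3: "\<bar>\<beta> x * (1 - exp (u x))\<bar> \<le> (B * exp U) * \<bar>u x\<bar>" by simp
    have e4: "A * \<bar>u' x\<bar> \<le> L * \<bar>u' x\<bar>" "(B * exp U) * \<bar>u x\<bar> \<le> L * \<bar>u x\<bar>"
      unfolding L_def using A B by (auto intro!: mult_right_mono)
    have "u'' x = \<alpha> x * u' x + \<beta> x * (1 - exp (u x))" using ode x sub by auto
    then have "\<bar>u'' x\<bar> \<le> \<bar>\<alpha> x * u' x\<bar> + \<bar>\<beta> x * (1 - exp (u x))\<bar>" by simp
    then show ?thesis using e1 e3 e4 by (simp add: algebra_simps)
  qed
  have "\<forall>x\<in>{t..x1}. u x = 0 \<and> u' x = 0"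
  proof (rule gronwall_back[of t x1 u u' u'' L])
    show "t \<le> x1" using t by auto
    show "L \<ge> 0" by (rule L0)
    show "u x1 = 0" "u' x1 = 0" by (rule u1, rule u'1)
    show "\<And>x. x \<in> {t..x1} \<Longrightarrow> \<bar>u'' x\<bar> \<le> L * (\<bar>u x\<bar> + \<bar>u' x\<bar>)" by (rule bnd)
    fix x assume x: "x \<in> {t..x1}"
    then have xin: "x \<in> {0..1}" using sub by auto
    show "(u has_real_derivative u' x) (at x within {t..x1})"
      by (rule DERIV_subset[OF du[rule_format, OF xin] sub(2)])
    show "(u' has_real_derivative u'' x) (at x within {t..x1})"
      by (rule DERIV_subset[OF du'[rule_format, OF xin] sub(2)])
  qed
  then show "u t = 0 \<and> u' t = 0" using t by auto
qed

lemma cont0: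
  fixes f :: "real \<Rightarrow> real"
  assumes "continuous_on {0..1} f" "0 < d" "d \<le> 1" "\<forall>x\<in>{0<..d}. f x = 0"
  shows "f 0 = 0"
proof -
  have c: "continuous_on {0..d} f" by (rule continuous_on_subset[OF assms(1)]) (use assms(3) in auto)
  have cl: "closed {x \<in> {0..d}. f x = 0}"
    by (rule continuous_closed_preimage_constant[OF c]) simp
  have "{0<..d} \<subseteq> {x \<in> {0..d}. f x = 0}" using assms(4) by auto
  then have "closure {0<..d} \<subseteq> {x \<in> {0..d}. f x = 0}" using cl by (rule closure_minimal)
  moreover have "closure {0<..d} = {0..d::real}" using assms(2) by simp
  ultimately have "{0..d} \<subseteq> {x \<in> {0..d}. f x = 0}" by simp
  moreover have "(0::real) \<in> {0..d}" using assms(2) by simp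
  ultimately show ?thesis by blast
qed

lemma intmax:
  fixes u u' u'' :: "real \<Rightarrow> real"
  assumes du: "\<forall>x\<in>{0..1}. (u has_real_derivative u' x) (at x within {0..1})"
    and du': "\<forall>x\<in>{0..1}. (u' has_real_derivative u'' x) (at x within {0..1})"
    and ex: "\<exists>x\<in>{0..1}. u x > u 0 \<and> u x > u 1"
  shows "\<exists>x1\<in>{0<..<1}. u' x1 = 0 \<and> u'' x1 \<le> 0 \<and> (\<forall>t\<in>{0..1}. u t \<le> u x1)"
proof -
  have cu: "continuous_on {0..1} u" by (rule DERIV_continuous_on) (use du in auto)
  obtain x1 where x1: "x1 \<in> {0..1::real}" "\<forall>t\<in>{0..1}. u t \<le> u x1"
    using continuous_attains_sup[OF compact_Icc _ cu] by auto
  obtain x where x: "x \<in> {0..1}" "u x > u 0" "u x > u 1" using ex by auto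
  have "x1 \<noteq> 0" "x1 \<noteq> 1" using x x1(2) by force+
  then have x1o: "x1 \<in> {0<..<1}" using x1(1) by auto
  have atw: "at y within {0..1} = at y" if "y \<in> {0<..<1}" for y :: real
  proof -
    have "at y within {0..1} = at y within {0<..<1}"
      using that by (intro at_within_nhd[of _ "{0<..<1}"]) auto
    also have "\<dots> = at y" by (rule at_within_open[OF that]) simp
    finally show ?thesis .
  qed
  have D: "DERIV u y :> u' y" "DERIV u' y :> u'' y" if "y \<in> {0<..<1}" for y
  proof -
    have y01: "y \<in> {0..1}" using that by auto
    show "DERIV u y :> u' y" "DERIV u' y :> u'' y"
      using du[rule_format, OF y01] du'[rule_format, OF y01] atw[OF that] by simp_all
  qed
  have d0: "0 < min x1 (1 - x1)" using x1o by auto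
  have "u' x1 = 0"
  proof (rule DERIV_local_max[OF D(1)[OF x1o] d0])
    show "\<forall>y. \<bar>x1 - y\<bar> < min x1 (1 - x1) \<longrightarrow> u y \<le> u x1"
      using x1(2) by (auto simp: abs_if split: if_splits)
  qed
  moreover have "u'' x1 \<le> 0"
  proof (rule ccontr)
    assume "\<not> u'' x1 \<le> 0"
    then have "u'' x1 > 0" by simp
    from DERIV_pos_inc_right[OF D(2)[OF x1o] this] obtain d where
      d: "d > 0" "\<forall>h>0. h < d \<longrightarrow> u' x1 < u' (x1 + h)" by auto
    define h where "h = min (d/2) ((1 - x1)/2)"
    have hh: "h \<le> (1 - x1)/2" "h \<le> d/2" unfolding h_def by (rule min.cobounded2, rule min.cobounded1)
    have h: "h > 0" "h < d" "x1 + h < 1" using d x1o hh by (auto simp: h_def)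
    obtain z where z: "x1 < z" "z < x1 + h" "u (x1 + h) - u x1 = (x1 + h - x1) * u' z"
      using MVT2[of x1 "x1 + h" u u'] h x1o D(1) by force
    have "u' z > 0" using d(2)[rule_format, of "z - x1"] z h \<open>u' x1 = 0\<close> by auto
    then have "h * u' z > 0" using h by simp
    then have "u (x1 + h) > u x1" using z by simp
    moreover have "x1 + h \<in> {0..1}" using h x1o by auto
    ultimately show False using x1(2) by force
  qed
  ultimately show ?thesis using x1o x1(2) by blast
qed


lemma F2_alt:
  assumes "K > 0" "p > 0" "q > 0"
  shows "F2 K p q = K powr (-1/3) * p powr (-4/3) * q powr (-2/3) * ((1-p)*(1+p-p*q))"
proof -
  have 1: "p powr (2/3) = p powr (-4/3) * p^2"
    using powr_add[of p "-4/3" 2] assms by simp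
  have 2: "p powr (-1/3) = p powr (-4/3) * p"
    using powr_add[of p "-4/3" 1] assms by simp
  have 3: "q powr (1/3) = q powr (-2/3) * q"
    using powr_add[of q "-2/3" 1] assms by simp
  show ?thesis unfolding F2_def 1 2 3 by (simp add: algebra_simps power2_eq_square)
qed

lemma F3_alt:
  assumes "K > 0" "p > 0" "q > 0"
  shows "F3 K p q = K powr (-1/3) * p powr (-4/3) * q powr (-2/3) * (p * ((1-q)*(p+p*q-1)))"
proof -
  have 1: "p powr (2/3) = p powr (-4/3) * p^2"
    using powr_add[of p "-4/3" 2] assms by simp
  have 2: "p powr (-1/3) = p powr (-4/3) * p"
    using powr_add[of p "-4/3" 1] assms by simp
  have 3: "q powr (1/3) = q powr (-2/3) * q"
    using powr_add[of q "-2/3" 1] assms by simp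
  have 4: "q powr (4/3) = q powr (-2/3) * q^2"
    using powr_add[of q "-2/3" 2] assms by simp
  show ?thesis unfolding F3_def 1 2 3 4 by (simp add: algebra_simps power2_eq_square)
qed

lemma F23_alt:
  assumes "K > 0" "p > 0" "q > 0"
  shows "F2 K p q + F3 K p q = K powr (-1/3) * p powr (-4/3) * q powr (-2/3) * ((1-p*q)*(1+p*q-p))"
  unfolding F2_alt[OF assms] F3_alt[OF assms] by (simp add: algebra_simps)

definition c2 :: "real \<Rightarrow> real \<Rightarrow> real \<Rightarrow> real" where
  "c2 a b c = exp (-(a/3) - 4*b/3 - 2*c/3)"

lemma c2_pos: "c2 a b c > 0" by (simp add: c2_def)

lemma F2_exp: "F2 (exp a) (exp b) (exp c) = c2 a b c * ((1 - exp b) * (1 + exp b - exp (b + c)))"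
proof -
  have "F2 (exp a) (exp b) (exp c) = exp a powr (-1/3) * exp b powr (-4/3) * exp c powr (-2/3) * ((1 - exp b) * (1 + exp b - exp b * exp c))"
    by (rule F2_alt) auto
  also have "exp a powr (-1/3) * exp b powr (-4/3) * exp c powr (-2/3) = c2 a b c"
    by (simp add: powr_def c2_def exp_add[symmetric] exp_diff[symmetric] algebra_simps)
  finally show ?thesis by (simp add: exp_add)
qed

lemma F3_exp: "F3 (exp a) (exp b) (exp c) = c2 a b c * exp b * ((1 - exp c) * (exp b + exp (b + c) - 1))"
proof -
  have "F3 (exp a) (exp b) (exp c) = exp a powr (-1/3) * exp b powr (-4/3) * exp c powr (-2/3) * (exp b * ((1 - exp c) * (exp b + exp b * exp c - 1)))"
    by (rule F3_alt) auto
  also have "exp a powr (-1/3) * exp b powr (-4/3) * exp c powr (-2/3) = c2 a b c"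
    by (simp add: powr_def c2_def exp_add[symmetric] exp_diff[symmetric] algebra_simps)
  finally show ?thesis by (simp add: exp_add)
qed

lemma F23_exp: "F2 (exp a) (exp b) (exp c) + F3 (exp a) (exp b) (exp c) = c2 a b c * ((1 - exp (b + c)) * (1 + exp (b + c) - exp b))"
proof -
  have "F2 (exp a) (exp b) (exp c) + F3 (exp a) (exp b) (exp c) = exp a powr (-1/3) * exp b powr (-4/3) * exp c powr (-2/3) * ((1 - exp b * exp c) * (1 + exp b * exp c - exp b))"
    by (rule F23_alt) auto
  also have "exp a powr (-1/3) * exp b powr (-4/3) * exp c powr (-2/3) = c2 a b c"
    by (simp add: powr_def c2_def exp_add[symmetric] exp_diff[symmetric] algebra_simps)
  finally show ?thesis by (simp add: exp_add)
qed


lemma one_minus_sq_pos: "0 < x \<Longrightarrow> x < (1::real) \<Longrightarrow> 0 < 1 - x^2"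
proof -
  assume x: "0 < x" "x < 1"
  have "x * x < 1 * 1" using x by (intro mult_strict_mono) auto
  then show ?thesis by (simp add: power2_eq_square)
qed

lemma weight1:
  fixes w w' :: "real \<Rightarrow> real"
  assumes x: "0 < x" "x < 1" and d: "(w has_real_derivative w' x) (at x)"
  shows "((\<lambda>t. (1-t*t)*(1-t*t)/t * w t) has_real_derivative
          ((1-x*x)*(1-x*x)/x * (w' x - (1 + 3*x^2) / (x * (1 - x^2)) * w x))) (at x)"
proof -
  have ne: "1 - x^2 \<noteq> 0" "x \<noteq> 0" using x one_minus_sq_pos[OF x] by auto
  show ?thesis
    apply (rule derivative_eq_intros refl d | rule ne)+
    using ne by (simp add: power2_eq_square field_simps)
qed

lemma weight2:
  fixes y1 y1' v v' :: "real \<Rightarrow> real"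
  assumes x: "0 < x" "x < 1" and d1: "(y1 has_real_derivative y1' x) (at x)"
    and d: "(v has_real_derivative v' x) (at x)"
  shows "((\<lambda>t. (1-t*t)*(1-t*t)*(1-t*t)/(t*t) * exp (y1 t / 2) * v t) has_real_derivative
          ((1-x*x)*(1-x*x)*(1-x*x)/(x*x) * exp (y1 x / 2) * (v' x - 2 * (1 + 2*x^2) / (x * (1 - x^2)) * v x + (1/2) * y1' x * v x))) (at x)"
proof -
  have ne: "1 - x^2 \<noteq> 0" "x \<noteq> 0" "x * x \<noteq> 0" using x one_minus_sq_pos[OF x] by auto
  have e: "((\<lambda>t. exp (y1 t / 2)) has_real_derivative exp (y1 x / 2) * (y1' x / 2)) (at x)"
    using DERIV_chain2[OF DERIV_exp DERIV_cdivide[OF d1, of 2]] by simp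
  have dW: "((\<lambda>t. (1-t*t)*(1-t*t)*(1-t*t)/(t*t)) has_real_derivative
     ((((0 - (1 * x + 1 * x)) * (1 - x * x) + (0 - (1 * x + 1 * x)) * (1 - x * x)) * (1 - x * x) +
       (0 - (1 * x + 1 * x)) * ((1 - x * x) * (1 - x * x))) * (x * x) -
      (1 - x * x) * (1 - x * x) * (1 - x * x) * (1 * x + 1 * x)) / (x * x * (x * x))) (at x)"
    by (rule refl | rule derivative_eq_intros | rule ne)+
  show ?thesis
    by (rule DERIV_cong[OF DERIV_mult[OF DERIV_mult[OF dW e] d]])
       (use ne in \<open>simp add: power2_eq_square power3_eq_cube field_simps\<close>)
qed


lemma atw: "y \<in> {0<..<1} \<Longrightarrow> at y within {0..1} = at (y::real)"
proof -
  assume y: "y \<in> {0<..<1}"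
  have "at y within {0..1} = at y within {0<..<1}"
    using y by (intro at_within_nhd[of _ "{0<..<1}"]) auto
  also have "\<dots> = at y" by (rule at_within_open[OF y]) simp
  finally show ?thesis .
qed

lemma weighted_sign:
  fixes y1 y1' v v' :: "real \<Rightarrow> real"
  assumes dy1: "\<forall>x\<in>{0<..<1}. (y1 has_real_derivative y1' x) (at x)"
    and dv: "\<forall>x\<in>{0<..<1}. (v has_real_derivative v' x) (at x)"
    and cy1: "continuous_on {0..1} y1" and cv: "continuous_on {0..1} v" and v1: "v 1 = 0"
    and sgn: "\<forall>x\<in>{0<..<1}. v' x - 2 * (1 + 2*x^2) / (x * (1 - x^2)) * v x + (1/2) * y1' x * v x \<le> 0"
  shows "\<forall>x\<in>{0<..<1}. v x \<ge> 0" and "\<forall>x0\<in>{0<..<1}. v x0 = 0 \<longrightarrow> (\<forall>t\<in>{x0..<1}. v t = 0)"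
proof -
  define \<nu> where "\<nu> t = (1-t*t)*(1-t*t)*(1-t*t)/(t*t) * exp (y1 t / 2)" for t :: real
  define A where "A t = \<nu> t * v t" for t :: real
  have \<nu>pos: "\<nu> t > 0" if "t \<in> {0<..<1}" for t :: real
  proof -
    have h: "0 < 1 - t*t" using one_minus_sq_pos[of t] that by (simp add: power2_eq_square)
    have "t*t > 0" using that by simp
    then show ?thesis unfolding \<nu>_def using h that by (intro mult_pos_pos divide_pos_pos) auto
  qed
  have cA: "continuous_on {0<..1} A"
    unfolding A_def \<nu>_def
    by (intro continuous_intros continuous_on_subset[OF cy1] continuous_on_subset[OF cv]) auto
  have dA: "(A has_real_derivative (\<nu> x * (v' x - 2 * (1 + 2*x^2) / (x * (1 - x^2)) * v x + (1/2) * y1' x * v x))) (at x)"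
    if "x \<in> {0<..<1}" for x :: real
    unfolding A_def \<nu>_def using weight2[of x y1 y1' v v'] that dy1 dv by (simp add: mult.assoc)
  have dAle: "\<nu> x * (v' x - 2 * (1 + 2*x^2) / (x * (1 - x^2)) * v x + (1/2) * y1' x * v x) \<le> 0"
    if "x \<in> {0<..<1}" for x :: real
    using \<nu>pos[OF that] sgn that by (simp add: mult_nonneg_nonpos)
  have mono: "A t \<le> A s" if "s \<in> {0<..1}" "t \<in> {0<..1}" "s \<le> t" for s t :: real
  proof (rule mono_nonpos[of s t A "\<lambda>x. \<nu> x * (v' x - 2 * (1 + 2*x^2) / (x * (1 - x^2)) * v x + (1/2) * y1' x * v x)"])
    show "s \<le> t" by fact
    show "continuous_on {s..t} A" by (rule continuous_on_subset[OF cA]) (use that in auto)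
    fix x assume "s < x" "x < t"
    then have "x \<in> {0<..<1}" using that by auto
    then show "(A has_real_derivative \<nu> x * (v' x - 2 * (1 + 2*x^2) / (x * (1 - x^2)) * v x + (1/2) * y1' x * v x)) (at x) \<and>
      \<nu> x * (v' x - 2 * (1 + 2*x^2) / (x * (1 - x^2)) * v x + (1/2) * y1' x * v x) \<le> 0"
      using dA dAle by blast
  qed
  have A1: "A 1 = 0" by (simp add: A_def v1)
  have Apos: "A x \<ge> 0" if "x \<in> {0<..1}" for x using mono[of x 1] that A1 by auto
  show "\<forall>x\<in>{0<..<1}. v x \<ge> 0"
  proof
    fix x :: real assume x: "x \<in> {0<..<1}"
    then have "\<nu> x * v x \<ge> 0" using Apos[of x] by (simp add: A_def)
    then show "v x \<ge> 0" using \<nu>pos[OF x] by (simp add: zero_le_mult_iff)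
  qed
  show "\<forall>x0\<in>{0<..<1}. v x0 = 0 \<longrightarrow> (\<forall>t\<in>{x0..<1}. v t = 0)"
  proof (intro ballI impI)
    fix x0 t :: real assume x0: "x0 \<in> {0<..<1}" and v0: "v x0 = 0" and t: "t \<in> {x0..<1}"
    have "A t \<le> A x0" using mono[of x0 t] x0 t by auto
    moreover have "A x0 = 0" by (simp add: A_def v0)
    moreover have "A t \<ge> 0" using Apos[of t] x0 t by auto
    ultimately have "A t = 0" by linarith
    then have "\<nu> t * v t = 0" by (simp only: A_def)
    moreover have "\<nu> t > 0" using \<nu>pos[of t] x0 t by auto
    ultimately show "v t = 0" by simp
  qed
qed

lemma strict_generic:
  fixes u u' u'' \<alpha> \<beta> :: "real \<Rightarrow> real"
  assumes du: "\<forall>x\<in>{0..1}. (u has_real_derivative u' x) (at x within {0..1})"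
    and du': "\<forall>x\<in>{0..1}. (u' has_real_derivative u'' x) (at x within {0..1})"
    and ca: "continuous_on {0<..<1} \<alpha>" and cb: "continuous_on {0<..<1} \<beta>"
    and ode: "\<forall>x\<in>{0<..<1}. u'' x = \<alpha> x * u' x + \<beta> x * (1 - exp (u x))"
    and u1: "u 1 = 0" and u0: "u 0 \<noteq> 0" and x0: "x0 \<in> {0<..<1}"
    and z: "\<forall>t\<in>{x0..<1}. u' t = 0"
  shows False
proof -
  define x1 where "x1 = (x0 + 1) / 2"
  have x1: "x1 \<in> {0<..<1}" "x0 < x1" using x0 by (auto simp: x1_def)
  have cu: "continuous_on {0..1} u" by (rule DERIV_continuous_on) (use du in auto)
  have "u 1 = u x1"
  proof (rule DERIV_isconst_end[of x1 1 u])
    show "x1 < 1" using x1 by auto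
    show "continuous_on {x1..1} u" by (rule continuous_on_subset[OF cu]) (use x1 in auto)
    fix x assume "x1 < x" "x < 1"
    then have xx: "x \<in> {0<..<1}" "u' x = 0" "x \<in> {0..1}" using x1 z by auto
    then show "DERIV u x :> 0" using du[rule_format, OF xx(3)] atw[OF xx(1)] by simp
  qed
  then have ux1: "u x1 = 0" using u1 by simp
  have u'x1: "u' x1 = 0" using z x1 by auto
  have sub: "{0<..x1} \<subseteq> {0<..<1}" using x1 by auto
  have "\<forall>t\<in>{0<..x1}. u t = 0 \<and> u' t = 0"
    by (rule zero_back[OF _ _ du du' continuous_on_subset[OF ca sub] continuous_on_subset[OF cb sub] _ ux1 u'x1])
       (use x1 ode sub in auto)
  then have "u 0 = 0" using x1 by (intro cont0[OF cu, of x1]) auto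
  then show False using u0 by simp
qed

lemma sm_from_deriv:
  fixes f f' :: "real \<Rightarrow> real"
  assumes "\<forall>x\<in>{0<..<1}. (f has_real_derivative f' x) (at x)" "\<forall>x\<in>{0<..<1}. f' x > 0"
  shows "\<forall>a\<in>{0<..<1}. \<forall>b\<in>{0<..<1}. a < b \<longrightarrow> f a < f b"
proof (intro ballI impI)
  fix a b :: real assume ab: "a \<in> {0<..<1}" "b \<in> {0<..<1}" "a < b"
  show "f a < f b"
  proof (rule DERIV_pos_imp_increasing[OF ab(3)])
    fix x assume "a \<le> x" "x \<le> b"
    then have "x \<in> {0<..<1}" using ab by auto
    then show "\<exists>y. DERIV f x :> y \<and> y > 0" using assms by blast
  qed
qed

lemma sq3: "(a::real)^2 + a*b + b^2 = 0 \<Longrightarrow> a = 0 \<and> b = 0"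
proof -
  assume h: "a^2 + a*b + b^2 = 0"
  have "(2*a+b)^2 + 3*b^2 = 4*(a^2 + a*b + b^2)" by (simp add: power2_eq_square algebra_simps)
  then have "(2*a+b)^2 + 3*b^2 = 0" using h by simp
  then have "b = 0" "2*a+b = 0" by (smt (verit) zero_le_power2 power_eq_0_iff)+
  then show ?thesis by simp
qed

lemma sq3_nonneg: "(a::real)^2 + a*b + b^2 \<ge> 0"
proof -
  have "(2*a+b)^2 + 3*b^2 = 4*(a^2 + a*b + b^2)" by (simp add: power2_eq_square algebra_simps)
  moreover have "(2*a+b)^2 + 3*b^2 \<ge> 0" by simp
  ultimately show ?thesis by simp
qed


lemma ode_alg:
  fixes y'' b y1' y' D G H e :: real
  assumes "y'' - b * y' + (1/2) * y1' * y' + D * (G * ((1 - e) * H)) = 0"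
  shows "y'' = (b - (1/2) * y1') * y' + (- D * G * H) * (1 - e)"
  using assms by (simp add: algebra_simps)

lemma add_eqs:
  fixes a1 a2 b p q y D f g :: real
  assumes "a1 - b * p + (1/2) * y * p + D * f = 0" "a2 - b * q + (1/2) * y * q + D * g = 0"
  shows "(a1 + a2) - b * (p + q) + (1/2) * y * (p + q) + D * (f + g) = 0"
proof -
  have "(a1 + a2) - b * (p + q) + (1/2) * y * (p + q) + D * (f + g) =
    (a1 - b * p + (1/2) * y * p + D * f) + (a2 - b * q + (1/2) * y * q + D * g)" by (simp add: algebra_simps)
  then show ?thesis using assms by simp
qed

lemma cancel_pos_ge: "(c::real) > 0 \<Longrightarrow> 0 \<le> c * F \<Longrightarrow> 0 \<le> F"
  by (simp add: zero_le_mult_iff)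

lemma cancel_pos_le: "(c::real) > 0 \<Longrightarrow> c * F \<le> 0 \<Longrightarrow> F \<le> 0"
  by (simp add: mult_le_0_iff)

lemma mult_pos_ge: "(c::real) > 0 \<Longrightarrow> 0 \<le> F \<Longrightarrow> 0 \<le> c * F"
  by simp

lemma mult_pos_le: "(c::real) > 0 \<Longrightarrow> F \<le> 0 \<Longrightarrow> c * F \<le> 0"
  by (simp add: mult_le_0_iff)

lemma const_tail:
  fixes u u' :: "real \<Rightarrow> real"
  assumes du: "\<forall>x\<in>{0..1}. (u has_real_derivative u' x) (at x within {0..1})"
    and x1: "x1 \<in> {0<..<1}" and z: "\<forall>t\<in>{x1..<1}. u' t = 0"
  shows "u x1 = u 1"
proof -
  have cu: "continuous_on {0..1} u" by (rule DERIV_continuous_on) (use du in auto)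
  have "u 1 = u x1"
  proof (rule DERIV_isconst_end[of x1 1 u])
    show "x1 < 1" using x1 by auto
    show "continuous_on {x1..1} u" by (rule continuous_on_subset[OF cu]) (use x1 in auto)
    fix x assume "x1 < x" "x < 1"
    then have xx: "x \<in> {0<..<1}" "u' x = 0" "x \<in> {0..1}" using x1 z by auto
    then show "DERIV u x :> 0" using du[rule_format, OF xx(3)] atw[OF xx(1)] by simp
  qed
  then show ?thesis by simp
qed

theorem lemma3p1:
  fixes I1 I2 I3 :: "real \<Rightarrow> real"
    and y1' y2' y3' y1'' y2'' y3'' :: "real \<Rightarrow> real"
    and lam1 lam2 lam3 :: real
  defines "K \<equiv> (\<lambda>x. I1 x * I2 x * I3 x)"
    and "\<phi>1 \<equiv> (\<lambda>x. I2 x / I1 x)"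
    and "\<phi>2 \<equiv> (\<lambda>x. I3 x / I2 x)"
    and "y1 \<equiv> (\<lambda>x. ln (I1 x * I2 x * I3 x))"
    and "y2 \<equiv> (\<lambda>x. ln (I2 x / I1 x))"
    and "y3 \<equiv> (\<lambda>x. ln (I3 x / I2 x))"
  assumes lam_pos: "lam1 > 0" "lam2 > 0" "lam3 > 0"
    and lam_distinct: "lam1 \<noteq> lam2" "lam2 \<noteq> lam3" "lam1 \<noteq> lam3"
    and smooth: "smooth_on {0..1} I1" "smooth_on {0..1} I2" "smooth_on {0..1} I3"
    and I_pos: "\<forall>x\<in>{0..1}. I1 x > 0 \<and> I2 x > 0 \<and> I3 x > 0"
    and I_one: "I1 1 = 1" "I2 1 = 1" "I3 1 = 1"
    and d1: "\<forall>x\<in>{0..1}. (y1 has_real_derivative y1' x) (at x within {0..1})"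
    and d2: "\<forall>x\<in>{0..1}. (y2 has_real_derivative y2' x) (at x within {0..1})"
    and d3: "\<forall>x\<in>{0..1}. (y3 has_real_derivative y3' x) (at x within {0..1})"
    and dd1: "\<forall>x\<in>{0..1}. (y1' has_real_derivative y1'' x) (at x within {0..1})"
    and dd2: "\<forall>x\<in>{0..1}. (y2' has_real_derivative y2'' x) (at x within {0..1})"
    and dd3: "\<forall>x\<in>{0..1}. (y3' has_real_derivative y3'' x) (at x within {0..1})"
    and K0: "K 0 < 1"
    and eq1: "\<forall>x\<in>{0<..<1}. y1'' x - (1 + 3*x^2) / (x * (1 - x^2)) * y1' x + (1/6) * (y1' x)^2
                + (1/3) * ((y2' x)^2 + y2' x * y3' x + (y3' x)^2) = 0"
    and eq2: "\<forall>x\<in>{0<..<1}. y1'' x - (5 + 7*x^2) / (x * (1 - x^2)) * y1' x + (1/2) * (y1' x)^2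
                + 16 / (1 - x^2)^2 * (3 - Upsilon (K x) (\<phi>1 x) (\<phi>2 x)) = 0"
    and eq3: "\<forall>x\<in>{0<..<1}. y2'' x - 2 * (1 + 2*x^2) / (x * (1 - x^2)) * y2' x + (1/2) * y1' x * y2' x
                + 32 / (1 - x^2)^2 * F2 (K x) (\<phi>1 x) (\<phi>2 x) = 0"
    and eq4: "\<forall>x\<in>{0<..<1}. y3'' x - 2 * (1 + 2*x^2) / (x * (1 - x^2)) * y3' x + (1/2) * y1' x * y3' x
                + 32 / (1 - x^2)^2 * F3 (K x) (\<phi>1 x) (\<phi>2 x) = 0"
    and bc_phi: "\<phi>1 0 = lam2 / lam1" "\<phi>2 0 = lam3 / lam2"
    and bc_d0: "y1' 0 = 0" "y2' 0 = 0" "y3' 0 = 0"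
    and bc_d1: "y1' 1 = 0" "y2' 1 = 0" "y3' 1 = 0"
  shows "(\<forall>x\<in>{0<..<1}. y1' x > 0) \<and>
         (\<phi>1 0 < 1 \<and> \<phi>1 0 * \<phi>2 0 < 1 \<and> 1 < \<phi>1 0 + \<phi>1 0 * \<phi>2 0 \<longrightarrow>
            (\<forall>x\<in>{0<..<1}. y2' x \<noteq> 0 \<and> y3' x \<noteq> 0 \<and> y2' x + y3' x \<noteq> 0) \<and>
            (strict_mono_on {0<..<1} K \<or> strict_antimono_on {0<..<1} K) \<and>
            (strict_mono_on {0<..<1} \<phi>1 \<or> strict_antimono_on {0<..<1} \<phi>1) \<and>
            (strict_mono_on {0<..<1} \<phi>2 \<or> strict_antimono_on {0<..<1} \<phi>2) \<and>
            (strict_mono_on {0<..<1} (\<lambda>x. \<phi>1 x * \<phi>2 x) \<or>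
             strict_antimono_on {0<..<1} (\<lambda>x. \<phi>1 x * \<phi>2 x)))"
proof -
  have Ipos: "I1 x > 0" "I2 x > 0" "I3 x > 0" if "x \<in> {0..1}" for x using I_pos that by auto
  have Ke: "K x = exp (y1 x)" if "x \<in> {0..1}" for x
    using Ipos[OF that] by (simp add: K_def y1_def)
  have p1e: "\<phi>1 x = exp (y2 x)" if "x \<in> {0..1}" for x
    using Ipos[OF that] by (simp add: \<phi>1_def y2_def)
  have p2e: "\<phi>2 x = exp (y3 x)" if "x \<in> {0..1}" for x
    using Ipos[OF that] by (simp add: \<phi>2_def y3_def)
  have y_one: "y1 1 = 0" "y2 1 = 0" "y3 1 = 0" by (simp_all add: y1_def y2_def y3_def I_one)
  have y10: "y1 0 < 0" using K0 Ke[of 0] by simp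
  have OS: "x \<in> {0..1}" if "x \<in> {0<..<1}" for x :: real using that by auto
  have D1: "(y1 has_real_derivative y1' x) (at x)" if "x \<in> {0<..<1}" for x
    using d1[rule_format, OF OS[OF that]] atw[OF that] by simp
  have D2: "(y2 has_real_derivative y2' x) (at x)" if "x \<in> {0<..<1}" for x
    using d2[rule_format, OF OS[OF that]] atw[OF that] by simp
  have D3: "(y3 has_real_derivative y3' x) (at x)" if "x \<in> {0<..<1}" for x
    using d3[rule_format, OF OS[OF that]] atw[OF that] by simp
  have DD1: "(y1' has_real_derivative y1'' x) (at x)" if "x \<in> {0<..<1}" for x
    using dd1[rule_format, OF OS[OF that]] atw[OF that] by simp
  have DD2: "(y2' has_real_derivative y2'' x) (at x)" if "x \<in> {0<..<1}" for x
    using dd2[rule_format, OF OS[OF that]] atw[OF that] by simp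
  have DD3: "(y3' has_real_derivative y3'' x) (at x)" if "x \<in> {0<..<1}" for x
    using dd3[rule_format, OF OS[OF that]] atw[OF that] by simp
  have C1: "continuous_on {0..1} y1" by (rule DERIV_continuous_on) (use d1 in auto)
  have C2: "continuous_on {0..1} y2" by (rule DERIV_continuous_on) (use d2 in auto)
  have C3: "continuous_on {0..1} y3" by (rule DERIV_continuous_on) (use d3 in auto)
  have C1': "continuous_on {0..1} y1'" by (rule DERIV_continuous_on) (use dd1 in auto)
  have C2': "continuous_on {0..1} y2'" by (rule DERIV_continuous_on) (use dd2 in auto)
  have C3': "continuous_on {0..1} y3'" by (rule DERIV_continuous_on) (use dd3 in auto)
  have sub01: "{0<..<1} \<subseteq> {0..1::real}" by auto
  have nz1: "x * (1 - x^2) \<noteq> 0" "(1 - x^2)^2 \<noteq> 0" "1 - x^2 > 0" if "x \<in> {0<..<1}" for x :: real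
    using one_minus_sq_pos[of x] that by auto
  have FF2: "F2 (K x) (\<phi>1 x) (\<phi>2 x) = c2 (y1 x) (y2 x) (y3 x) * ((1 - exp (y2 x)) * (1 + exp (y2 x) - exp (y2 x + y3 x)))"
    if "x \<in> {0..1}" for x
    using Ke[OF that] p1e[OF that] p2e[OF that] F2_exp by simp
  have FF3: "F3 (K x) (\<phi>1 x) (\<phi>2 x) = (c2 (y1 x) (y2 x) (y3 x) * exp (y2 x)) * ((1 - exp (y3 x)) * (exp (y2 x) + exp (y2 x + y3 x) - 1))"
    if "x \<in> {0..1}" for x
    using Ke[OF that] p1e[OF that] p2e[OF that] F3_exp by simp
  have FF23: "F2 (K x) (\<phi>1 x) (\<phi>2 x) + F3 (K x) (\<phi>1 x) (\<phi>2 x) = c2 (y1 x) (y2 x) (y3 x) * ((1 - exp (y2 x + y3 x)) * (1 + exp (y2 x + y3 x) - exp (y2 x)))"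
    if "x \<in> {0..1}" for x
    using Ke[OF that] p1e[OF that] p2e[OF that] F23_exp by simp
  define b where "b x = 2 * (1 + 2*x^2) / (x * (1 - x^2))" for x :: real
  define \<alpha> where "\<alpha> x = b x - (1/2) * y1' x" for x
  define \<beta>2 where "\<beta>2 x = - (32 / (1 - x^2)^2) * c2 (y1 x) (y2 x) (y3 x) * (1 + exp (y2 x) - exp (y2 x + y3 x))" for x
  define \<beta>3 where "\<beta>3 x = - (32 / (1 - x^2)^2) * (c2 (y1 x) (y2 x) (y3 x) * exp (y2 x)) * (exp (y2 x) + exp (y2 x + y3 x) - 1)" for x
  define \<beta>z where "\<beta>z x = - (32 / (1 - x^2)^2) * c2 (y1 x) (y2 x) (y3 x) * (1 + exp (y2 x + y3 x) - exp (y2 x))" for x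
  have ca: "continuous_on {0<..<1} \<alpha>" unfolding \<alpha>_def b_def
    by (intro continuous_intros continuous_on_subset[OF C1' sub01]) (use nz1 in auto)
  have cb2: "continuous_on {0<..<1} \<beta>2" unfolding \<beta>2_def c2_def
    by (intro continuous_intros continuous_on_subset[OF C1 sub01] continuous_on_subset[OF C2 sub01] continuous_on_subset[OF C3 sub01]) (use nz1 in auto)
  have cb3: "continuous_on {0<..<1} \<beta>3" unfolding \<beta>3_def c2_def
    by (intro continuous_intros continuous_on_subset[OF C1 sub01] continuous_on_subset[OF C2 sub01] continuous_on_subset[OF C3 sub01]) (use nz1 in auto)
  have cbz: "continuous_on {0<..<1} \<beta>z" unfolding \<beta>z_def c2_def
    by (intro continuous_intros continuous_on_subset[OF C1 sub01] continuous_on_subset[OF C2 sub01] continuous_on_subset[OF C3 sub01]) (use nz1 in auto)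
  have E3: "y2'' x - b x * y2' x + (1/2) * y1' x * y2' x + 32 / (1 - x^2)^2 * F2 (K x) (\<phi>1 x) (\<phi>2 x) = 0"
    if "x \<in> {0<..<1}" for x using eq3 that by (simp add: b_def)
  have E4: "y3'' x - b x * y3' x + (1/2) * y1' x * y3' x + 32 / (1 - x^2)^2 * F3 (K x) (\<phi>1 x) (\<phi>2 x) = 0"
    if "x \<in> {0<..<1}" for x using eq4 that by (simp add: b_def)
  have ode2: "\<forall>x\<in>{0<..<1}. y2'' x = \<alpha> x * y2' x + \<beta>2 x * (1 - exp (y2 x))"
  proof
    fix x :: real assume x: "x \<in> {0<..<1}"
    show "y2'' x = \<alpha> x * y2' x + \<beta>2 x * (1 - exp (y2 x))"
      unfolding \<alpha>_def \<beta>2_def by (rule ode_alg) (use E3[OF x] FF2[OF OS[OF x]] in simp)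
  qed
  have ode3: "\<forall>x\<in>{0<..<1}. y3'' x = \<alpha> x * y3' x + \<beta>3 x * (1 - exp (y3 x))"
  proof
    fix x :: real assume x: "x \<in> {0<..<1}"
    show "y3'' x = \<alpha> x * y3' x + \<beta>3 x * (1 - exp (y3 x))"
      unfolding \<alpha>_def \<beta>3_def by (rule ode_alg) (use E4[OF x] FF3[OF OS[OF x]] in simp)
  qed
  have E34: "(y2'' x + y3'' x) - b x * (y2' x + y3' x) + (1/2) * y1' x * (y2' x + y3' x) + 32 / (1 - x^2)^2 * (F2 (K x) (\<phi>1 x) (\<phi>2 x) + F3 (K x) (\<phi>1 x) (\<phi>2 x)) = 0"
    if "x \<in> {0<..<1}" for x :: real by (rule add_eqs[OF E3[OF that] E4[OF that]])
  have odez: "\<forall>x\<in>{0<..<1}. y2'' x + y3'' x = \<alpha> x * (y2' x + y3' x) + \<beta>z x * (1 - exp (y2 x + y3 x))"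
  proof
    fix x :: real assume x: "x \<in> {0<..<1}"
    show "y2'' x + y3'' x = \<alpha> x * (y2' x + y3' x) + \<beta>z x * (1 - exp (y2 x + y3 x))"
      unfolding \<alpha>_def \<beta>z_def by (rule ode_alg) (use E34[OF x] FF23[OF OS[OF x]] in simp)
  qed
  have y1pos: "\<forall>x\<in>{0<..<1}. y1' x > 0"
  proof -
    define a where "a x = (1 + 3*x^2) / (x * (1 - x^2))" for x :: real
    define \<mu> where "\<mu> t = (1-t*t)*(1-t*t)/t" for t :: real
    define A where "A t = \<mu> t * y1' t" for t
    have \<mu>pos: "\<mu> t > 0" if "t \<in> {0<..<1}" for t
    proof -
      have h: "0 < 1 - t*t" using one_minus_sq_pos[of t] that by (simp add: power2_eq_square)
      then show ?thesis unfolding \<mu>_def using h that by (intro mult_pos_pos divide_pos_pos) auto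
    qed
    have cA: "continuous_on {0<..1} A"
      unfolding A_def \<mu>_def
      by (intro continuous_intros continuous_on_subset[OF C1']) auto
    have E1: "y1'' x - a x * y1' x = - (1/6) * (y1' x)^2 - (1/3) * ((y2' x)^2 + y2' x * y3' x + (y3' x)^2)"
      if "x \<in> {0<..<1}" for x using eq1[rule_format, OF that] unfolding a_def by linarith
    have dA: "(A has_real_derivative (\<mu> x * (y1'' x - a x * y1' x))) (at x)"
      if "x \<in> {0<..<1}" for x
      unfolding A_def \<mu>_def a_def using weight1[of x y1' y1''] that DD1 by simp
    have dAle: "\<mu> x * (y1'' x - a x * y1' x) \<le> 0" if "x \<in> {0<..<1}" for x
    proof -
      have n1: "- (1/6) * (y1' x)^2 \<le> 0" by simp
      have n2: "- (1/3) * ((y2' x)^2 + y2' x * y3' x + (y3' x)^2) \<le> 0" using sq3_nonneg[of "y2' x" "y3' x"] by simp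
      have "y1'' x - a x * y1' x \<le> 0" unfolding E1[OF that] using n1 n2 by linarith
      then show ?thesis using \<mu>pos[OF that] by (simp add: mult_nonneg_nonpos)
    qed
    have mono: "A t \<le> A s" if "s \<in> {0<..1}" "t \<in> {0<..1}" "s \<le> t" for s t
    proof (rule mono_nonpos[of s t A "\<lambda>x. \<mu> x * (y1'' x - a x * y1' x)"])
      show "s \<le> t" by fact
      show "continuous_on {s..t} A" by (rule continuous_on_subset[OF cA]) (use that in auto)
      fix x assume "s < x" "x < t"
      then have "x \<in> {0<..<1}" using that by auto
      then show "(A has_real_derivative \<mu> x * (y1'' x - a x * y1' x)) (at x) \<and> \<mu> x * (y1'' x - a x * y1' x) \<le> 0"
        using dA dAle by blast
    qed
    have A1: "A 1 = 0" by (simp add: A_def \<mu>_def)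
    have Apos: "A x \<ge> 0" if "x \<in> {0<..1}" for x using mono[of x 1] that A1 by auto
    have nn: "y1' x \<ge> 0" if x: "x \<in> {0<..<1}" for x
    proof -
      have "\<mu> x * y1' x \<ge> 0" using Apos[of x] x by (simp add: A_def)
      then show "y1' x \<ge> 0" using \<mu>pos[OF x] by (simp add: zero_le_mult_iff)
    qed
    show ?thesis
    proof (rule ccontr)
      assume "\<not> ?thesis"
      then obtain x0 where x0: "x0 \<in> {0<..<1}" "y1' x0 \<le> 0" by auto
      then have y0: "y1' x0 = 0" using nn by force
      have zero1: "y1' t = 0" if t: "t \<in> {x0..<1}" for t
      proof -
        have "A t \<le> A x0" using mono[of x0 t] x0 t by auto
        moreover have "A x0 = 0" by (simp add: A_def y0)
        moreover have "A t \<ge> 0" using Apos[of t] x0 t by auto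
        ultimately have "A t = 0" by linarith
        then have "\<mu> t * y1' t = 0" by (simp only: A_def)
        moreover have "\<mu> t > 0" using \<mu>pos[of t] x0 t by auto
        ultimately show "y1' t = 0" by simp
      qed
      have zero23: "y2' t = 0 \<and> y3' t = 0" if t: "t \<in> {x0<..<1}" for t
      proof -
        have tO: "t \<in> {0<..<1}" using t x0 by auto
        have "y1'' t = 0"
        proof (rule DERIV_local_const[OF DD1[OF tO]])
          show "0 < min (t - x0) (1 - t)" using t by auto
          show "\<forall>y. \<bar>t - y\<bar> < min (t - x0) (1 - t) \<longrightarrow> y1' t = y1' y"
            using zero1 t by (auto simp: abs_if split: if_splits)
        qed
        then have "(y2' t)^2 + y2' t * y3' t + (y3' t)^2 = 0"
          using E1[OF tO] zero1[of t] t by simp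
        then show ?thesis by (rule sq3)
      qed
      define x1 where "x1 = (x0 + 1) / 2"
      have x1: "x1 \<in> {0<..<1}" "x0 < x1" using x0 by (auto simp: x1_def)
      have sub: "{0<..x1} \<subseteq> {0<..<1}" using x1 by auto
      have z2: "\<forall>t\<in>{x1..<1}. y2' t = 0" "\<forall>t\<in>{x1..<1}. y3' t = 0" "\<forall>t\<in>{x1..<1}. y1' t = 0"
        using zero23 zero1 x1 by auto
      have v2: "y2 x1 = 0" using const_tail[OF d2 x1(1) z2(1)] y_one by simp
      have v3: "y3 x1 = 0" using const_tail[OF d3 x1(1) z2(2)] y_one by simp
      have v1: "y1 x1 = 0" using const_tail[OF d1 x1(1) z2(3)] y_one by simp
      have w2: "\<forall>t\<in>{0<..x1}. y2 t = 0 \<and> y2' t = 0"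
        by (rule zero_back[OF _ _ d2 dd2 continuous_on_subset[OF ca sub] continuous_on_subset[OF cb2 sub] _ v2])
           (use x1 ode2 sub z2 in auto)
      have w3: "\<forall>t\<in>{0<..x1}. y3 t = 0 \<and> y3' t = 0"
        by (rule zero_back[OF _ _ d3 dd3 continuous_on_subset[OF ca sub] continuous_on_subset[OF cb3 sub] _ v3])
           (use x1 ode3 sub z2 in auto)
      define \<alpha>1 where "\<alpha>1 x = a x - (1/6) * y1' x" for x
      have ca1: "continuous_on {0<..x1} \<alpha>1" unfolding \<alpha>1_def a_def
        by (intro continuous_intros continuous_on_subset[OF C1']) (use nz1 sub in auto)
      have w1: "\<forall>t\<in>{0<..x1}. y1 t = 0 \<and> y1' t = 0"
      proof (rule zero_back[OF _ _ d1 dd1 ca1 continuous_on_const[of _ 0] _ v1])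
        show "0 < x1" "x1 \<le> 1" using x1 by auto
        show "y1' x1 = 0" using z2 x1 by auto
        show "\<forall>x\<in>{0<..x1}. y1'' x = \<alpha>1 x * y1' x + 0 * (1 - exp (y1 x))"
        proof
          fix x assume x: "x \<in> {0<..x1}"
          then have "y2' x = 0" "y3' x = 0" using w2 w3 by auto
          then show "y1'' x = \<alpha>1 x * y1' x + 0 * (1 - exp (y1 x))"
            using E1[of x] x sub unfolding \<alpha>1_def by (auto simp: algebra_simps power2_eq_square)
        qed
      qed
      have "y1 0 = 0" using w1 x1 by (intro cont0[OF C1, of x1]) auto
      then show False using y10 by simp
    qed
  qed
  have C2'o: "continuous_on {0..1} (\<lambda>x. y2' x + y3' x)" using C2' C3' by (intro continuous_intros)
  have dz: "\<forall>x\<in>{0..1}. ((\<lambda>x. y2 x + y3 x) has_real_derivative y2' x + y3' x) (at x within {0..1})"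
    using d2 d3 by (auto intro: DERIV_add)
  have dz': "\<forall>x\<in>{0..1}. ((\<lambda>x. y2' x + y3' x) has_real_derivative y2'' x + y3'' x) (at x within {0..1})"
    using dd2 dd3 by (auto intro: DERIV_add)
  have Dz: "((\<lambda>x. y2 x + y3 x) has_real_derivative y2' x + y3' x) (at x)" if "x \<in> {0<..<1}" for x
    using D2[OF that] D3[OF that] by (rule DERIV_add)
  have DDz: "((\<lambda>x. y2' x + y3' x) has_real_derivative y2'' x + y3'' x) (at x)" if "x \<in> {0<..<1}" for x
    using DD2[OF that] DD3[OF that] by (rule DERIV_add)
  have D1a: "\<forall>x\<in>{0<..<1}. (y1 has_real_derivative y1' x) (at x)" using D1 by blast
  have DD2a: "\<forall>x\<in>{0<..<1}. (y2' has_real_derivative y2'' x) (at x)" using DD2 by blast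
  have DD3a: "\<forall>x\<in>{0<..<1}. (y3' has_real_derivative y3'' x) (at x)" using DD3 by blast
  have DDza: "\<forall>x\<in>{0<..<1}. ((\<lambda>x. y2' x + y3' x) has_real_derivative y2'' x + y3'' x) (at x)" using DDz by blast
  have coefpos: "32 / (1 - x^2)^2 > 0" if "x \<in> {0<..<1}" for x :: real
    using nz1[OF that] by simp
  have c2p: "c2 (y1 x) (y2 x) (y3 x) > 0" for x by (rule c2_pos)
  have part2: "(\<forall>x\<in>{0<..<1}. y2' x > 0) \<and> (\<forall>x\<in>{0<..<1}. y2' x + y3' x > 0) \<and>
     ((\<forall>x\<in>{0<..<1}. y3' x > 0) \<or> (\<forall>x\<in>{0<..<1}. y3' x < 0))"
    if H: "\<phi>1 0 < 1" "\<phi>1 0 * \<phi>2 0 < 1" "1 < \<phi>1 0 + \<phi>1 0 * \<phi>2 0"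
  proof -
    have e0: "\<phi>1 0 = exp (y2 0)" "\<phi>2 0 = exp (y3 0)" using p1e[of 0] p2e[of 0] by auto
    have y20: "y2 0 < 0" using H(1) e0 by simp
    have z0: "y2 0 + y3 0 < 0" using H(2) e0 by (simp add: exp_add[symmetric])
    have s0: "1 < exp (y2 0) + exp (y2 0 + y3 0)" using H(3) e0 by (simp add: exp_add)
    have getP: "\<exists>x1\<in>{0..1}. (\<forall>t\<in>{0..1}. y2 t \<le> y2 x1) \<and> y2 x1 > 0 \<and> exp (y2 x1 + y3 x1) \<ge> 1 + exp (y2 x1)"
      if "\<exists>x\<in>{0..1}. y2 x > 0"
    proof -
      have "\<exists>x\<in>{0..1}. y2 x > y2 0 \<and> y2 x > y2 1" using that y20 y_one by force
      then obtain x1 where x1: "x1 \<in> {0<..<1}" "y2' x1 = 0" "y2'' x1 \<le> 0" "\<forall>t\<in>{0..1}. y2 t \<le> y2 x1"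
        using intmax[OF d2 dd2] by blast
      have pos: "y2 x1 > 0" using that x1(4) by force
      have "32 / (1 - x1^2)^2 * F2 (K x1) (\<phi>1 x1) (\<phi>2 x1) = - y2'' x1" using E3[OF x1(1)] x1(2) by simp
      then have "32 / (1 - x1^2)^2 * F2 (K x1) (\<phi>1 x1) (\<phi>2 x1) \<ge> 0" using x1(3) by simp
      then have "F2 (K x1) (\<phi>1 x1) (\<phi>2 x1) \<ge> 0" by (rule cancel_pos_ge[OF coefpos[OF x1(1)]])
      then have "(1 - exp (y2 x1)) * (1 + exp (y2 x1) - exp (y2 x1 + y3 x1)) \<ge> 0"
        using FF2[OF OS[OF x1(1)]] c2p[of x1] by (simp add: zero_le_mult_iff)
      moreover have "1 - exp (y2 x1) < 0" using pos by simp
      ultimately have "1 + exp (y2 x1) - exp (y2 x1 + y3 x1) \<le> 0" by (simp add: zero_le_mult_iff)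
      then show ?thesis using x1 pos by force
    qed
    have getZ: "\<exists>x1\<in>{0..1}. (\<forall>t\<in>{0..1}. y2 t + y3 t \<le> y2 x1 + y3 x1) \<and> y2 x1 + y3 x1 > 0 \<and> exp (y2 x1) \<ge> 1 + exp (y2 x1 + y3 x1)"
      if "\<exists>x\<in>{0..1}. y2 x + y3 x > 0"
    proof -
      have "\<exists>x\<in>{0..1}. y2 x + y3 x > y2 0 + y3 0 \<and> y2 x + y3 x > y2 1 + y3 1" using that z0 y_one by force
      then obtain x1 where x1: "x1 \<in> {0<..<1}" "y2' x1 + y3' x1 = 0" "y2'' x1 + y3'' x1 \<le> 0" "\<forall>t\<in>{0..1}. y2 t + y3 t \<le> y2 x1 + y3 x1"
        using intmax[OF dz dz'] by blast
      have pos: "y2 x1 + y3 x1 > 0" using that x1(4) by force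
      have "32 / (1 - x1^2)^2 * (F2 (K x1) (\<phi>1 x1) (\<phi>2 x1) + F3 (K x1) (\<phi>1 x1) (\<phi>2 x1)) = - (y2'' x1 + y3'' x1)"
        using E34[OF x1(1)] x1(2) by simp
      then have "32 / (1 - x1^2)^2 * (F2 (K x1) (\<phi>1 x1) (\<phi>2 x1) + F3 (K x1) (\<phi>1 x1) (\<phi>2 x1)) \<ge> 0" using x1(3) by simp
      then have "F2 (K x1) (\<phi>1 x1) (\<phi>2 x1) + F3 (K x1) (\<phi>1 x1) (\<phi>2 x1) \<ge> 0" by (rule cancel_pos_ge[OF coefpos[OF x1(1)]])
      then have "(1 - exp (y2 x1 + y3 x1)) * (1 + exp (y2 x1 + y3 x1) - exp (y2 x1)) \<ge> 0"
        using FF23[OF OS[OF x1(1)]] c2p[of x1] by (simp add: zero_le_mult_iff)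
      moreover have "1 - exp (y2 x1 + y3 x1) < 0" using pos by simp
      ultimately have "1 + exp (y2 x1 + y3 x1) - exp (y2 x1) \<le> 0" by (simp add: zero_le_mult_iff)
      then show ?thesis using x1 pos by force
    qed
    have noP: "\<forall>x\<in>{0..1}. y2 x \<le> 0"
    proof (rule ccontr)
      assume "\<not> ?thesis"
      then have "\<exists>x\<in>{0..1}. y2 x > 0" by force
      then obtain x1 where x1: "x1 \<in> {0..1}" "\<forall>t\<in>{0..1}. y2 t \<le> y2 x1" "y2 x1 > 0" "exp (y2 x1 + y3 x1) \<ge> 1 + exp (y2 x1)"
        using getP by blast
      have "exp (y2 x1 + y3 x1) > 1" using x1(4) by (smt (verit) exp_gt_zero)
      then have "y2 x1 + y3 x1 > 0" by (metis exp_zero exp_less_cancel_iff)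
      then obtain x2 where x2: "x2 \<in> {0..1}" "\<forall>t\<in>{0..1}. y2 t + y3 t \<le> y2 x2 + y3 x2" "exp (y2 x2) \<ge> 1 + exp (y2 x2 + y3 x2)"
        using getZ x1(1) by blast
      have "exp (y2 x1 + y3 x1) \<le> exp (y2 x2 + y3 x2)" using x2(2) x1(1) by simp
      moreover have "exp (y2 x2) \<le> exp (y2 x1)" using x1(2) x2(1) by simp
      ultimately show False using x1(4) x2(3) by linarith
    qed
    have noZ: "\<forall>x\<in>{0..1}. y2 x + y3 x \<le> 0"
    proof (rule ccontr)
      assume "\<not> ?thesis"
      then have "\<exists>x\<in>{0..1}. y2 x + y3 x > 0" by force
      then obtain x2 where x2: "x2 \<in> {0..1}" "exp (y2 x2) \<ge> 1 + exp (y2 x2 + y3 x2)"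
        using getZ by blast
      have "exp (y2 x2) > 1" using x2(2) by (smt (verit) exp_gt_zero)
      then have "y2 x2 > 0" by (metis exp_zero exp_less_cancel_iff)
      then show False using noP x2(1) by force
    qed
    have sg2: "\<forall>x\<in>{0<..<1}. y2'' x - 2 * (1 + 2*x^2) / (x * (1 - x^2)) * y2' x + (1/2) * y1' x * y2' x \<le> 0"
    proof
      fix x :: real assume x: "x \<in> {0<..<1}"
      have a1: "1 - exp (y2 x) \<ge> 0" using noP OS[OF x] by simp
      have a2: "exp (y2 x + y3 x) \<le> 1" using noZ OS[OF x] by simp
      have "1 + exp (y2 x) - exp (y2 x + y3 x) \<ge> 0" using a2 exp_gt_zero[of "y2 x"] by linarith
      then have "F2 (K x) (\<phi>1 x) (\<phi>2 x) \<ge> 0" using FF2[OF OS[OF x]] c2p[of x] a1 by simp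
      then have "32 / (1 - x^2)^2 * F2 (K x) (\<phi>1 x) (\<phi>2 x) \<ge> 0" by (rule mult_pos_ge[OF coefpos[OF x]])
      then show "y2'' x - 2 * (1 + 2*x^2) / (x * (1 - x^2)) * y2' x + (1/2) * y1' x * y2' x \<le> 0"
        using E3[OF x] unfolding b_def by linarith
    qed
    have y2p: "\<forall>x\<in>{0<..<1}. y2' x > 0"
    proof -
      have ws: "\<forall>x\<in>{0<..<1}. y2' x \<ge> 0" "\<forall>x0\<in>{0<..<1}. y2' x0 = 0 \<longrightarrow> (\<forall>t\<in>{x0..<1}. y2' t = 0)"
        by (rule weighted_sign[OF D1a DD2a C1 C2' bc_d1(2) sg2])+
      show ?thesis
      proof (rule ccontr)
        assume "\<not> ?thesis"
        then obtain x0 where x0: "x0 \<in> {0<..<1}" "y2' x0 \<le> 0" by force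
        then have "y2' x0 = 0" using ws(1) by force
        then have "\<forall>t\<in>{x0..<1}. y2' t = 0" using ws(2) x0 by blast
        then show False
          using strict_generic[OF d2 dd2 ca cb2 ode2 y_one(2) _ x0(1)] y20 by auto
      qed
    qed
    have sgz: "\<forall>x\<in>{0<..<1}. (y2'' x + y3'' x) - 2 * (1 + 2*x^2) / (x * (1 - x^2)) * (y2' x + y3' x) + (1/2) * y1' x * (y2' x + y3' x) \<le> 0"
    proof
      fix x :: real assume x: "x \<in> {0<..<1}"
      have a1: "1 - exp (y2 x + y3 x) \<ge> 0" using noZ OS[OF x] by simp
      have a2: "exp (y2 x) \<le> 1" using noP OS[OF x] by simp
      have "1 + exp (y2 x + y3 x) - exp (y2 x) \<ge> 0" using a2 exp_gt_zero[of "y2 x + y3 x"] by linarith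
      then have "F2 (K x) (\<phi>1 x) (\<phi>2 x) + F3 (K x) (\<phi>1 x) (\<phi>2 x) \<ge> 0" using FF23[OF OS[OF x]] c2p[of x] a1 by simp
      then have "32 / (1 - x^2)^2 * (F2 (K x) (\<phi>1 x) (\<phi>2 x) + F3 (K x) (\<phi>1 x) (\<phi>2 x)) \<ge> 0" by (rule mult_pos_ge[OF coefpos[OF x]])
      then show "(y2'' x + y3'' x) - 2 * (1 + 2*x^2) / (x * (1 - x^2)) * (y2' x + y3' x) + (1/2) * y1' x * (y2' x + y3' x) \<le> 0"
        using E34[OF x] unfolding b_def by linarith
    qed
    have zp: "\<forall>x\<in>{0<..<1}. y2' x + y3' x > 0"
    proof -
      have ws: "\<forall>x\<in>{0<..<1}. y2' x + y3' x \<ge> 0" "\<forall>x0\<in>{0<..<1}. y2' x0 + y3' x0 = 0 \<longrightarrow> (\<forall>t\<in>{x0..<1}. y2' t + y3' t = 0)"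
        by (rule weighted_sign[OF D1a DDza C1 C2'o _ sgz], simp add: bc_d1)+
      show ?thesis
      proof (rule ccontr)
        assume "\<not> ?thesis"
        then obtain x0 where x0: "x0 \<in> {0<..<1}" "y2' x0 + y3' x0 \<le> 0" by force
        then have "y2' x0 + y3' x0 = 0" using ws(1) by force
        then have "\<forall>t\<in>{x0..<1}. y2' t + y3' t = 0" using ws(2) x0 by blast
        then show False
          using strict_generic[OF dz dz' ca cbz odez _ _ x0(1)] y_one z0 by auto
      qed
    qed
    have inc: "f 0 \<le> f x" if x: "x \<in> {0..1}" and cf: "continuous_on {0..1} f"
      and df: "\<forall>t\<in>{0<..<1}. (f has_real_derivative f' t) (at t) \<and> f' t > 0" for f f' :: "real \<Rightarrow> real" and x
    proof -
      have "(\<lambda>t. - f t) x \<le> (\<lambda>t. - f t) 0"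
      proof (rule mono_nonpos[of 0 x "\<lambda>t. - f t" "\<lambda>t. - f' t"])
        show "0 \<le> x" using x by auto
        show "continuous_on {0..x} (\<lambda>t. - f t)"
          by (intro continuous_intros continuous_on_subset[OF cf]) (use x in auto)
        fix t assume "0 < t" "t < x"
        then have "t \<in> {0<..<1}" using x by auto
        then have "(f has_real_derivative f' t) (at t)" "f' t > 0" using df by auto
        then show "((\<lambda>t. - f t) has_real_derivative - f' t) (at t) \<and> - f' t \<le> 0"
          by (auto intro: derivative_intros)
      qed
      then show ?thesis by simp
    qed
    have sumx: "1 < exp (y2 x) + exp (y2 x + y3 x)" if x: "x \<in> {0..1}" for x
    proof -
      have "\<forall>t\<in>{0<..<1}. (y2 has_real_derivative y2' t) (at t) \<and> y2' t > 0" using D2 y2p by blast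
      then have m1: "y2 0 \<le> y2 x" by (rule inc[OF x C2])
      have dd: "\<forall>t\<in>{0<..<1}. ((\<lambda>t. y2 t + y3 t) has_real_derivative y2' t + y3' t) (at t) \<and> y2' t + y3' t > 0"
        using Dz zp by blast
      have cc: "continuous_on {0..1} (\<lambda>t. y2 t + y3 t)" using C2 C3 by (intro continuous_intros)
      have m2: "(\<lambda>t. y2 t + y3 t) 0 \<le> (\<lambda>t. y2 t + y3 t) x"
        by (rule inc[OF x cc dd])
      from m1 m2 have "exp (y2 0) \<le> exp (y2 x)" "exp (y2 0 + y3 0) \<le> exp (y2 x + y3 x)" by auto
      then show ?thesis using s0 by linarith
    qed
    have y30: "y3 0 \<noteq> 0"
    proof
      assume "y3 0 = 0"
      then have "\<phi>2 0 = 1" using e0 by simp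
      then show False using bc_phi(2) lam_pos lam_distinct(2) by (simp add: field_simps)
    qed
    have F3sign: "F3 (K x) (\<phi>1 x) (\<phi>2 x) = (c2 (y1 x) (y2 x) (y3 x) * exp (y2 x) * (exp (y2 x) + exp (y2 x + y3 x) - 1)) * (1 - exp (y3 x))"
      "c2 (y1 x) (y2 x) (y3 x) * exp (y2 x) * (exp (y2 x) + exp (y2 x + y3 x) - 1) > 0"
      if x: "x \<in> {0..1}" for x
    proof -
      show "F3 (K x) (\<phi>1 x) (\<phi>2 x) = (c2 (y1 x) (y2 x) (y3 x) * exp (y2 x) * (exp (y2 x) + exp (y2 x + y3 x) - 1)) * (1 - exp (y3 x))"
        using FF3[OF x] by (simp add: algebra_simps)
      show "c2 (y1 x) (y2 x) (y3 x) * exp (y2 x) * (exp (y2 x) + exp (y2 x + y3 x) - 1) > 0"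
        using sumx[OF x] c2p[of x] by simp
    qed
    have y3sign: "(\<forall>x\<in>{0<..<1}. y3' x > 0) \<or> (\<forall>x\<in>{0<..<1}. y3' x < 0)"
    proof (cases "y3 0 < 0")
      case True
      have noQ: "\<forall>x\<in>{0..1}. y3 x \<le> 0"
      proof (rule ccontr)
        assume "\<not> ?thesis"
        then obtain x where x: "x \<in> {0..1}" "y3 x > 0" by force
        then have "\<exists>x\<in>{0..1}. y3 x > y3 0 \<and> y3 x > y3 1" using True y_one by force
        then obtain x1 where x1: "x1 \<in> {0<..<1}" "y3' x1 = 0" "y3'' x1 \<le> 0" "\<forall>t\<in>{0..1}. y3 t \<le> y3 x1"
          using intmax[OF d3 dd3] by blast
        have pos: "y3 x1 > 0" using x x1(4) by force
        have "32 / (1 - x1^2)^2 * F3 (K x1) (\<phi>1 x1) (\<phi>2 x1) = - y3'' x1" using E4[OF x1(1)] x1(2) by simp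
        then have "32 / (1 - x1^2)^2 * F3 (K x1) (\<phi>1 x1) (\<phi>2 x1) \<ge> 0" using x1(3) by simp
        then have "F3 (K x1) (\<phi>1 x1) (\<phi>2 x1) \<ge> 0" by (rule cancel_pos_ge[OF coefpos[OF x1(1)]])
        moreover have "F3 (K x1) (\<phi>1 x1) (\<phi>2 x1) < 0"
          unfolding F3sign(1)[OF OS[OF x1(1)]] using F3sign(2)[OF OS[OF x1(1)]] pos
          by (simp add: mult_pos_neg)
        ultimately show False by simp
      qed
      have sg3: "\<forall>x\<in>{0<..<1}. y3'' x - 2 * (1 + 2*x^2) / (x * (1 - x^2)) * y3' x + (1/2) * y1' x * y3' x \<le> 0"
      proof
        fix x :: real assume x: "x \<in> {0<..<1}"
        have "1 - exp (y3 x) \<ge> 0" using noQ OS[OF x] by simp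
        then have "F3 (K x) (\<phi>1 x) (\<phi>2 x) \<ge> 0"
          unfolding F3sign(1)[OF OS[OF x]] using F3sign(2)[OF OS[OF x]] by simp
        then have "32 / (1 - x^2)^2 * F3 (K x) (\<phi>1 x) (\<phi>2 x) \<ge> 0" by (rule mult_pos_ge[OF coefpos[OF x]])
        then show "y3'' x - 2 * (1 + 2*x^2) / (x * (1 - x^2)) * y3' x + (1/2) * y1' x * y3' x \<le> 0"
          using E4[OF x] unfolding b_def by linarith
      qed
      have ws: "\<forall>x\<in>{0<..<1}. y3' x \<ge> 0" "\<forall>x0\<in>{0<..<1}. y3' x0 = 0 \<longrightarrow> (\<forall>t\<in>{x0..<1}. y3' t = 0)"
        by (rule weighted_sign[OF D1a DD3a C1 C3' bc_d1(3) sg3])+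
      have "\<forall>x\<in>{0<..<1}. y3' x > 0"
      proof (rule ccontr)
        assume "\<not> ?thesis"
        then obtain x0 where x0: "x0 \<in> {0<..<1}" "y3' x0 \<le> 0" by force
        then have "y3' x0 = 0" using ws(1) by force
        then have "\<forall>t\<in>{x0..<1}. y3' t = 0" using ws(2) x0 by blast
        then show False
          using strict_generic[OF d3 dd3 ca cb3 ode3 y_one(3) y30 x0(1)] by auto
      qed
      then show ?thesis by blast
    next
      case False
      then have T: "y3 0 > 0" using y30 by simp
      have noQ: "\<forall>x\<in>{0..1}. y3 x \<ge> 0"
      proof (rule ccontr)
        assume "\<not> ?thesis"
        then obtain x where x: "x \<in> {0..1}" "y3 x < 0" by force
        then have "\<exists>x\<in>{0..1}. - y3 x > - y3 0 \<and> - y3 x > - y3 1" using T y_one by force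
        moreover have "\<forall>x\<in>{0..1}. ((\<lambda>x. - y3 x) has_real_derivative - y3' x) (at x within {0..1})"
          using d3 by (auto intro: derivative_intros)
        moreover have "\<forall>x\<in>{0..1}. ((\<lambda>x. - y3' x) has_real_derivative - y3'' x) (at x within {0..1})"
          using dd3 by (auto intro: derivative_intros)
        ultimately obtain x1 where x1: "x1 \<in> {0<..<1}" "- y3' x1 = 0" "- y3'' x1 \<le> 0" "\<forall>t\<in>{0..1}. - y3 t \<le> - y3 x1"
          using intmax[of "\<lambda>x. - y3 x" "\<lambda>x. - y3' x" "\<lambda>x. - y3'' x"] by blast
        have neg: "y3 x1 < 0" using x x1(4) by force
        have "32 / (1 - x1^2)^2 * F3 (K x1) (\<phi>1 x1) (\<phi>2 x1) = - y3'' x1" using E4[OF x1(1)] x1(2) by simp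
        then have "32 / (1 - x1^2)^2 * F3 (K x1) (\<phi>1 x1) (\<phi>2 x1) \<le> 0" using x1(3) by simp
        then have "F3 (K x1) (\<phi>1 x1) (\<phi>2 x1) \<le> 0" by (rule cancel_pos_le[OF coefpos[OF x1(1)]])
        moreover have "F3 (K x1) (\<phi>1 x1) (\<phi>2 x1) > 0"
          unfolding F3sign(1)[OF OS[OF x1(1)]] using F3sign(2)[OF OS[OF x1(1)]] neg
          by simp
        ultimately show False by simp
      qed
      have sg3: "\<forall>x\<in>{0<..<1}. (- y3'' x) - 2 * (1 + 2*x^2) / (x * (1 - x^2)) * (- y3' x) + (1/2) * y1' x * (- y3' x) \<le> 0"
      proof
        fix x :: real assume x: "x \<in> {0<..<1}"
        have "1 - exp (y3 x) \<le> 0" using noQ OS[OF x] by simp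
        then have "F3 (K x) (\<phi>1 x) (\<phi>2 x) \<le> 0"
          unfolding F3sign(1)[OF OS[OF x]] using F3sign(2)[OF OS[OF x]] by (simp add: mult_le_0_iff)
        then have "32 / (1 - x^2)^2 * F3 (K x) (\<phi>1 x) (\<phi>2 x) \<le> 0" by (rule mult_pos_le[OF coefpos[OF x]])
        then show "(- y3'' x) - 2 * (1 + 2*x^2) / (x * (1 - x^2)) * (- y3' x) + (1/2) * y1' x * (- y3' x) \<le> 0"
          using E4[OF x] unfolding b_def by linarith
      qed
      have C3'm: "continuous_on {0..1} (\<lambda>x. - y3' x)" using C3' by (intro continuous_intros)
      have DD3m: "\<forall>x\<in>{0<..<1}. ((\<lambda>x. - y3' x) has_real_derivative - y3'' x) (at x)"
        using DD3 by (auto intro: derivative_intros)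
      have ws: "\<forall>x\<in>{0<..<1}. - y3' x \<ge> 0" "\<forall>x0\<in>{0<..<1}. - y3' x0 = 0 \<longrightarrow> (\<forall>t\<in>{x0..<1}. - y3' t = 0)"
        by (rule weighted_sign[OF D1a DD3m C1 C3'm _ sg3], simp add: bc_d1)+
      have "\<forall>x\<in>{0<..<1}. y3' x < 0"
      proof (rule ccontr)
        assume "\<not> ?thesis"
        then obtain x0 where x0: "x0 \<in> {0<..<1}" "y3' x0 \<ge> 0" by force
        then have "y3' x0 = 0" using ws(1) by force
        then have "\<forall>t\<in>{x0..<1}. y3' t = 0" using ws(2) x0 by auto
        then show False
          using strict_generic[OF d3 dd3 ca cb3 ode3 y_one(3) y30 x0(1)] by auto
      qed
      then show ?thesis by blast
    qed
    show ?thesis using y2p zp y3sign by blast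
  qed
  have gen: "strict_mono_on {0<..<1} g"
    if g: "\<forall>x\<in>{0<..<1}. g x = exp (f x)" and df: "\<forall>x\<in>{0<..<1}. (f has_real_derivative f' x) (at x)"
      and fp: "\<forall>x\<in>{0<..<1}. f' x > 0" for g f f' :: "real \<Rightarrow> real"
  proof (rule monotone_onI)
    fix a b :: real assume ab: "a \<in> {0<..<1}" "b \<in> {0<..<1}" "a < b"
    have "f a < f b" using sm_from_deriv[OF df fp] ab by blast
    then show "g a < g b" using g ab by simp
  qed
  have genA: "strict_antimono_on {0<..<1} g"
    if g: "\<forall>x\<in>{0<..<1}. g x = exp (f x)" and df: "\<forall>x\<in>{0<..<1}. (f has_real_derivative f' x) (at x)"
      and fp: "\<forall>x\<in>{0<..<1}. f' x < 0" for g f f' :: "real \<Rightarrow> real"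
  proof (rule monotone_onI)
    fix a b :: real assume ab: "a \<in> {0<..<1}" "b \<in> {0<..<1}" "a < b"
    have df': "\<forall>x\<in>{0<..<1}. ((\<lambda>x. - f x) has_real_derivative - f' x) (at x)"
      using df by (auto intro: derivative_intros)
    have fp': "\<forall>x\<in>{0<..<1}. - f' x > 0" using fp by auto
    have "- f a < - f b" using sm_from_deriv[OF df' fp'] ab by blast
    then show "g b < g a" using g ab by simp
  qed
  have D2a: "\<forall>x\<in>{0<..<1}. (y2 has_real_derivative y2' x) (at x)" using D2 by blast
  have D3a: "\<forall>x\<in>{0<..<1}. (y3 has_real_derivative y3' x) (at x)" using D3 by blast
  have Dza: "\<forall>x\<in>{0<..<1}. ((\<lambda>x. y2 x + y3 x) has_real_derivative y2' x + y3' x) (at x)" using Dz by blast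
  have gK: "\<forall>x\<in>{0<..<1}. K x = exp (y1 x)" using Ke by auto
  have g1: "\<forall>x\<in>{0<..<1}. \<phi>1 x = exp (y2 x)" using p1e by auto
  have g2: "\<forall>x\<in>{0<..<1}. \<phi>2 x = exp (y3 x)" using p2e by auto
  have g12: "\<forall>x\<in>{0<..<1}. \<phi>1 x * \<phi>2 x = exp (y2 x + y3 x)" using p1e p2e by (auto simp: exp_add)
  have smK: "strict_mono_on {0<..<1} K" by (rule gen[OF gK D1a y1pos])
  have fin: "(\<forall>x\<in>{0<..<1}. y2' x \<noteq> 0 \<and> y3' x \<noteq> 0 \<and> y2' x + y3' x \<noteq> 0) \<and>
            (strict_mono_on {0<..<1} K \<or> strict_antimono_on {0<..<1} K) \<and>
            (strict_mono_on {0<..<1} \<phi>1 \<or> strict_antimono_on {0<..<1} \<phi>1) \<and>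
            (strict_mono_on {0<..<1} \<phi>2 \<or> strict_antimono_on {0<..<1} \<phi>2) \<and>
            (strict_mono_on {0<..<1} (\<lambda>x. \<phi>1 x * \<phi>2 x) \<or>
             strict_antimono_on {0<..<1} (\<lambda>x. \<phi>1 x * \<phi>2 x))"
    if H: "\<phi>1 0 < 1" "\<phi>1 0 * \<phi>2 0 < 1" "1 < \<phi>1 0 + \<phi>1 0 * \<phi>2 0"
  proof -
    have P: "\<forall>x\<in>{0<..<1}. y2' x > 0" "\<forall>x\<in>{0<..<1}. y2' x + y3' x > 0"
      "(\<forall>x\<in>{0<..<1}. y3' x > 0) \<or> (\<forall>x\<in>{0<..<1}. y3' x < 0)"
      using part2[OF H] by blast+
    have s1: "strict_mono_on {0<..<1} \<phi>1" by (rule gen[OF g1 D2a P(1)])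
    have s12: "strict_mono_on {0<..<1} (\<lambda>x. \<phi>1 x * \<phi>2 x)" by (rule gen[OF g12 Dza P(2)])
    have s2: "strict_mono_on {0<..<1} \<phi>2 \<or> strict_antimono_on {0<..<1} \<phi>2"
      using P(3) gen[OF g2 D3a] genA[OF g2 D3a] by blast
    have nz: "\<forall>x\<in>{0<..<1}. y2' x \<noteq> 0 \<and> y3' x \<noteq> 0 \<and> y2' x + y3' x \<noteq> 0"
      using P by force
    show ?thesis using nz smK s1 s2 s12 by blast
  qed
  show ?thesis using y1pos fin by blast
qed


end
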